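(* Let $G$ be a finite group acting (via a homomorphism $\Gamma_G: G \to S_A$) on a finite set $A = X \sqcup Y$ of cardinality $n$, and suppose the action is partition-preserving. Let $\Omega = \Omega_X \sqcup \Omega_Y$ be a set of colors, with weight functions $\omega_X:\Omega_X\to\mathbb{N}^+$ and $\omega_Y:\Omega_Y\to\mathbb{N}^+$ having only finitely many colors of each weight, and let $f_X$, $f_Y$ be their generating functions. Let $\Phi$ be the set of valid colorings of $A$. Then the action of $G$ on $A$ induces an action on $\Phi$ given by $(g\varphi)(a) = \varphi(ga)$, and, as formal power series, $$\sum_{w\ge 0} \#\{\text{orbits of } G \text{ on } \Phi \text{ consisting of colorings of total weight } w\}\, x^w \;=\; \tilde Z_G\big(f_X(x), f_X(x^2),\ldots, f_X(x^n), f_Y(x), f_Y(x^2),\ldots, f_Y(x^n)\big).$$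
   Context: For a finite set $A$, $S_A$ is the group of bijections $A\to A$; every element of $S_A$ decomposes uniquely (up to order) into pairwise disjoint cycles. An action $\Gamma_G$ of $G$ on $A = X\sqcup Y$ is partition-preserving if for all $g\in G$ and $a\in A$: $ga\in X \iff a\in X$ and $ga\in Y\iff a\in Y$; equivalently every cycle of every $\Gamma_G(g)$ lies entirely in $X$ or entirely in $Y$. For $g\in G$, $C_k^X(g)$ (resp. $C_k^Y(g)$) denotes the number of $k$-cycles in the disjoint cycle decomposition of $\Gamma_G(g)$ contained in $X$ (resp. $Y$), where fixed points count as 1-cycles. The bipartite cycle index is the polynomial $$\tilde Z_G(x_1,\ldots,x_n,y_1,\ldots,y_n) = \frac{1}{|G|}\sum_{g\in G} x_1^{C_1^X(g)}\cdots x_n^{C_n^X(g)}\, y_1^{C_1^Y(g)}\cdots y_n^{C_n^Y(g)}.$$ For a weight function $\omega:\Omega'\to\mathbb{N}$ with $|\omega^{-1}(i)|$ finite for all $i$, its generating function is $f_\omega(x)=\sum_{i\ge 0}|\omega^{-1}(i)|\,x^i$. A coloring $\varphi: A\to\Omega_X\sqcup\Omega_Y$ is valid if $\varphi(a)\in\Omega_X\iff a\in X$ and $\varphi(a)\in\Omega_Y\iff a\in Y$. The total weight of a valid coloring $\varphi$ is $\sum_{a\in X}\omega_X(\varphi(a)) + \sum_{a\in Y}\omega_Y(\varphi(a))$. *)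

theory Defs
  imports "HOL-Algebra.Group_Action" "HOL-Computational_Algebra.Formal_Power_Series"
begin

definition cyc :: "('a \<Rightarrow> 'a) \<Rightarrow> 'a \<Rightarrow> 'a set" where
  "cyc s a = {(s ^^ i) a | i. True}"

definition cycle_count :: "'a set \<Rightarrow> nat \<Rightarrow> ('a \<Rightarrow> 'a) \<Rightarrow> nat" where
  "cycle_count B k s = card {cyc s a | a. a \<in> B \<and> cyc s a \<subseteq> B \<and> card (cyc s a) = k}"

definition bip_cycle_index ::
  "('g, 'm) monoid_scheme \<Rightarrow> ('g \<Rightarrow> 'a \<Rightarrow> 'a) \<Rightarrow> 'a set \<Rightarrow> 'a set
     \<Rightarrow> (nat \<Rightarrow> 'r::field fps) \<Rightarrow> (nat \<Rightarrow> 'r fps) \<Rightarrow> 'r fps" where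
  "bip_cycle_index G \<Gamma> X Y xs ys =
     fps_const (1 / of_nat (card (carrier G))) *
     (\<Sum>g\<in>carrier G. \<Prod>k\<in>{1..card (X \<union> Y)}.
        xs k ^ cycle_count X k (\<Gamma> g) * ys k ^ cycle_count Y k (\<Gamma> g))"

definition gen_fun :: "'c set \<Rightarrow> ('c \<Rightarrow> nat) \<Rightarrow> 'r::semiring_1 fps" where
  "gen_fun \<Omega> \<omega> = Abs_fps (\<lambda>i. of_nat (card {c \<in> \<Omega>. \<omega> c = i}))"

definition valid_colorings :: "'a set \<Rightarrow> 'a set \<Rightarrow> 'c set \<Rightarrow> 'c set \<Rightarrow> ('a \<Rightarrow> 'c) set" where
  "valid_colorings X Y \<Omega>X \<Omega>Y =
     {\<phi> \<in> (X \<union> Y) \<rightarrow>\<^sub>E (\<Omega>X \<union> \<Omega>Y).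
        \<forall>a \<in> X \<union> Y. (\<phi> a \<in> \<Omega>X \<longleftrightarrow> a \<in> X) \<and> (\<phi> a \<in> \<Omega>Y \<longleftrightarrow> a \<in> Y)}"

definition total_weight :: "'a set \<Rightarrow> 'a set \<Rightarrow> ('c \<Rightarrow> nat) \<Rightarrow> ('c \<Rightarrow> nat) \<Rightarrow> ('a \<Rightarrow> 'c) \<Rightarrow> nat" where
  "total_weight X Y \<omega>X \<omega>Y \<phi> = (\<Sum>a\<in>X. \<omega>X (\<phi> a)) + (\<Sum>a\<in>Y. \<omega>Y (\<phi> a))"

definition col_act :: "('g \<Rightarrow> 'a \<Rightarrow> 'a) \<Rightarrow> 'a set \<Rightarrow> 'g \<Rightarrow> ('a \<Rightarrow> 'c) \<Rightarrow> ('a \<Rightarrow> 'c)" where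
  "col_act \<Gamma> A g \<phi> = (\<lambda>a\<in>A. \<phi> (\<Gamma> g a))"

definition col_orbits ::
  "('g, 'm) monoid_scheme \<Rightarrow> ('g \<Rightarrow> 'a \<Rightarrow> 'a) \<Rightarrow> 'a set \<Rightarrow> ('a \<Rightarrow> 'c) set \<Rightarrow> ('a \<Rightarrow> 'c) set set" where
  "col_orbits G \<Gamma> A \<Phi> = {{col_act \<Gamma> A g \<phi> | g. g \<in> carrier G} | \<phi>. \<phi> \<in> \<Phi>}"

end

theory Submission imports Defs "HOL-Algebra.Multiplicative_Group" begin
unbundle fps_syntax

lemma compose_X_power_nth:
  assumes "k > 0"
  shows "(a oo fps_X ^ k) $ n = (if k dvd n then a $ (n div k) else (0::'r::comm_semiring_1))"
proof -
  have "(a oo fps_X ^ k) $ n = (\<Sum>i=0..n. a $ i * (if n = k * i then 1 else 0))"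
    by (simp add: fps_compose_nth power_mult[symmetric])
  also have "\<dots> = (\<Sum>i\<in>{0..n} \<inter> {i. n = k * i}. a $ i)"
    by (simp add: sum.inter_restrict if_distrib cong: if_cong)
  also have "\<dots> = (if k dvd n then a $ (n div k) else 0)"
  proof (cases "k dvd n")
    case True
    then obtain m where m: "n = k * m" by auto
    have "{0..n} \<inter> {i. n = k * i} = {m}" using m assms by auto
    then show ?thesis using True m assms by simp
  next
    case False
    then have "{0..n} \<inter> {i. n = k * i} = {}" by auto
    then show ?thesis using False by simp
  qed
  finally show ?thesis .
qed

lemma gen_fun_compose:
  assumes "k > 0"
  shows "Abs_fps (\<lambda>n. of_nat (card {c \<in> \<Omega>. k * \<omega> c = n})) = (gen_fun \<Omega> \<omega> oo fps_X ^ k :: 'r::comm_semiring_1 fps)"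
proof (rule fps_ext)
  fix n
  show "Abs_fps (\<lambda>n. of_nat (card {c \<in> \<Omega>. k * \<omega> c = n})) $ n = (gen_fun \<Omega> \<omega> oo fps_X ^ k :: 'r fps) $ n"
  proof (cases "k dvd n")
    case True
    then obtain m where m: "n = k * m" by auto
    have "{c \<in> \<Omega>. k * \<omega> c = n} = {c \<in> \<Omega>. \<omega> c = m}" using m assms by auto
    then show ?thesis using m assms by (simp add: compose_X_power_nth gen_fun_def)
  next
    case False
    then have "{c \<in> \<Omega>. k * \<omega> c = n} = {}" by auto
    then have "card {c \<in> \<Omega>. k * \<omega> c = n} = 0" by (simp only: card.empty)
    then show ?thesis using False assms by (simp add: compose_X_power_nth gen_fun_def)
  qed
qed

lemma finite_weight_PiE:
  assumes "finite I" "\<forall>i\<in>I. \<forall>n. finite {s\<in>S i. wt i s = n}"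
  shows "finite {f\<in>PiE I S. (\<Sum>i\<in>I. wt i (f i)) = (n::nat)}"
proof (rule finite_subset)
  show "{f\<in>PiE I S. (\<Sum>i\<in>I. wt i (f i)) = n} \<subseteq> PiE I (\<lambda>i. \<Union>k\<in>{..n}. {s\<in>S i. wt i s = k})"
  proof clarify
    fix f assume f: "f \<in> PiE I S" "n = (\<Sum>i\<in>I. wt i (f i))"
    show "f \<in> PiE I (\<lambda>i. \<Union>k\<in>{..(\<Sum>i\<in>I. wt i (f i))}. {s\<in>S i. wt i s = k})"
      using f assms(1) by (auto simp: PiE_iff intro: member_le_sum)
  qed
  show "finite (PiE I (\<lambda>i. \<Union>k\<in>{..n}. {s\<in>S i. wt i s = k}))"
    using assms by (intro finite_PiE) auto
qed

lemma gf_PiE: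
  assumes "finite I" "\<forall>i\<in>I. \<forall>n. finite {s\<in>S i. wt i s = n}"
  shows "Abs_fps (\<lambda>n. of_nat (card {f\<in>PiE I S. (\<Sum>i\<in>I. wt i (f i)) = n}))
       = (\<Prod>i\<in>I. Abs_fps (\<lambda>n. of_nat (card {s\<in>S i. wt i s = n})) :: 'r::comm_semiring_1 fps)"
  using assms
proof (induction I rule: finite_induct)
  case empty
  show ?case by (rule fps_ext) (auto simp: fps_one_nth)
next
  case (insert j I)
  let ?W = "\<lambda>f. (\<Sum>i\<in>I. wt i (f i))"
  have fin1: "\<And>k. finite {s\<in>S j. wt j s = k}" using insert by auto
  have fin2: "\<And>k. finite {f\<in>PiE I S. ?W f = k}"
    using finite_weight_PiE[of I S wt] insert by auto
  have IH: "Abs_fps (\<lambda>n. of_nat (card {f\<in>PiE I S. ?W f = n}))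
       = (\<Prod>i\<in>I. Abs_fps (\<lambda>n. of_nat (card {s\<in>S i. wt i s = n})) :: 'r fps)"
    using insert by auto
  have key: "card {f\<in>PiE (insert j I) S. (\<Sum>i\<in>insert j I. wt i (f i)) = n}
     = (\<Sum>k=0..n. card {s\<in>S j. wt j s = k} * card {f\<in>PiE I S. ?W f = n - k})" for n
  proof -
    let ?h = "\<lambda>(y, g). g(j := y)"
    let ?U = "\<Union>k\<in>{0..n}. {s\<in>S j. wt j s = k} \<times> {f\<in>PiE I S. ?W f = n - k}"
    have sumeq: "(\<Sum>i\<in>I. wt i ((g(j:=y)) i)) = ?W g" for g y
      using insert(2) by (intro sum.cong) auto
    have "{f\<in>PiE (insert j I) S. (\<Sum>i\<in>insert j I. wt i (f i)) = n} = ?h ` ?U"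
    proof
      show "{f\<in>PiE (insert j I) S. (\<Sum>i\<in>insert j I. wt i (f i)) = n} \<subseteq> ?h ` ?U"
      proof
        fix f assume "f \<in> {f\<in>PiE (insert j I) S. (\<Sum>i\<in>insert j I. wt i (f i)) = n}"
        then have f: "f \<in> PiE (insert j I) S" "n = (\<Sum>i\<in>insert j I. wt i (f i))" by auto
        obtain y g where yg: "y \<in> S j" "g \<in> PiE I S" "f = g(j := y)"
          using f(1) unfolding PiE_insert_eq by auto
        have "n = wt j y + ?W g" using f(2) insert(1,2) yg sumeq by simp
        then show "f \<in> ?h ` ?U" using yg f by (auto intro!: image_eqI[of _ _ "(y, g)"])
      qed
      show "?h ` ?U \<subseteq> {f\<in>PiE (insert j I) S. (\<Sum>i\<in>insert j I. wt i (f i)) = n}"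
        using insert(1,2) sumeq by (auto simp: PiE_insert_eq)
    qed
    moreover have "inj_on ?h ?U"
      by (rule inj_on_subset[OF inj_combinator[OF insert(2), of S]]) auto
    ultimately have "card {f\<in>PiE (insert j I) S. (\<Sum>i\<in>insert j I. wt i (f i)) = n} = card ?U"
      by (simp add: card_image)
    also have "\<dots> = (\<Sum>k=0..n. card ({s\<in>S j. wt j s = k} \<times> {f\<in>PiE I S. ?W f = n - k}))"
      by (rule card_UN_disjoint) (auto simp: fin1 fin2)
    finally show ?thesis by (simp add: card_cartesian_product)
  qed
  have "Abs_fps (\<lambda>n. of_nat (card {f\<in>PiE (insert j I) S. (\<Sum>i\<in>insert j I. wt i (f i)) = n}))
     = Abs_fps (\<lambda>n. of_nat (card {s\<in>S j. wt j s = n})) * (Abs_fps (\<lambda>n. of_nat (card {f\<in>PiE I S. ?W f = n})) :: 'r fps)"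
    by (rule fps_ext) (simp add: fps_mult_nth key)
  then show ?case
    using insert(1,2) by (simp add: IH)
qed

locale colact = group_action G A \<Gamma> for G and A and \<Gamma> +
  assumes finG: "finite (carrier G)"
begin

definition orb where "orb \<phi> = {col_act \<Gamma> A g \<phi> | g. g \<in> carrier G}"
definition stab where "stab \<phi> = {g \<in> carrier G. col_act \<Gamma> A g \<phi> = \<phi>}"

lemma grp: "group G"
  by (rule group_hom.axioms(1)[OF group_hom])

lemma mclosed: "g \<in> carrier G \<Longrightarrow> h \<in> carrier G \<Longrightarrow> g \<otimes>\<^bsub>G\<^esub> h \<in> carrier G"
  by (rule monoid.m_closed[OF group.is_monoid[OF grp]])

lemma oneclosed: "\<one>\<^bsub>G\<^esub> \<in> carrier G"
  by (rule monoid.one_closed[OF group.is_monoid[OF grp]])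

lemma invclosed: "g \<in> carrier G \<Longrightarrow> inv\<^bsub>G\<^esub> g \<in> carrier G"
  by (rule group.inv_closed[OF grp])

lemma massoc: "g \<in> carrier G \<Longrightarrow> h \<in> carrier G \<Longrightarrow> k \<in> carrier G \<Longrightarrow> g \<otimes>\<^bsub>G\<^esub> h \<otimes>\<^bsub>G\<^esub> k = g \<otimes>\<^bsub>G\<^esub> (h \<otimes>\<^bsub>G\<^esub> k)"
  by (rule monoid.m_assoc[OF group.is_monoid[OF grp]])

lemma rinv: "g \<in> carrier G \<Longrightarrow> g \<otimes>\<^bsub>G\<^esub> inv\<^bsub>G\<^esub> g = \<one>\<^bsub>G\<^esub>"
  by (rule group.r_inv[OF grp])

lemma linv: "g \<in> carrier G \<Longrightarrow> inv\<^bsub>G\<^esub> g \<otimes>\<^bsub>G\<^esub> g = \<one>\<^bsub>G\<^esub>"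
  by (rule group.l_inv[OF grp])

lemma rone: "g \<in> carrier G \<Longrightarrow> g \<otimes>\<^bsub>G\<^esub> \<one>\<^bsub>G\<^esub> = g"
  by (rule monoid.r_one[OF group.is_monoid[OF grp]])

lemma lone: "g \<in> carrier G \<Longrightarrow> \<one>\<^bsub>G\<^esub> \<otimes>\<^bsub>G\<^esub> g = g"
  by (rule monoid.l_one[OF group.is_monoid[OF grp]])

lemma col_act_comp:
  assumes "g \<in> carrier G" "h \<in> carrier G"
  shows "col_act \<Gamma> A h (col_act \<Gamma> A g \<phi>) = col_act \<Gamma> A (g \<otimes>\<^bsub>G\<^esub> h) \<phi>"
  unfolding col_act_def
proof (rule restrict_ext)
  fix a assume a: "a \<in> A"
  have "\<Gamma> h a \<in> A" using element_image[OF assms(2) a refl] .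
  then show "(\<lambda>a\<in>A. \<phi> (\<Gamma> g a)) (\<Gamma> h a) = \<phi> (\<Gamma> (g \<otimes>\<^bsub>G\<^esub> h) a)"
    using a assms by (simp add: composition_rule)
qed

lemma Gamma_one: "a \<in> A \<Longrightarrow> \<Gamma> \<one>\<^bsub>G\<^esub> a = a"
proof -
  assume a: "a \<in> A"
  have "\<Gamma> \<one>\<^bsub>G\<^esub> = (\<lambda>x \<in> A. x)" using id_eq_one by simp
  then show ?thesis using a by simp
qed

lemma col_act_one:
  assumes "\<phi> \<in> extensional A"
  shows "col_act \<Gamma> A \<one>\<^bsub>G\<^esub> \<phi> = \<phi>"
proof
  fix a
  show "col_act \<Gamma> A \<one>\<^bsub>G\<^esub> \<phi> a = \<phi> a"
    using assms unfolding col_act_def by (cases "a \<in> A") (simp_all add: Gamma_one extensional_def)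
qed

lemma col_act_ext: "col_act \<Gamma> A g \<phi> \<in> extensional A"
  unfolding col_act_def by simp

lemma fiber_card:
  assumes "\<phi> \<in> extensional A" "g0 \<in> carrier G"
  shows "card {g \<in> carrier G. col_act \<Gamma> A g \<phi> = col_act \<Gamma> A g0 \<phi>} = card (stab \<phi>)"
proof -
  have "bij_betw (\<lambda>h. h \<otimes>\<^bsub>G\<^esub> g0) (stab \<phi>) {g \<in> carrier G. col_act \<Gamma> A g \<phi> = col_act \<Gamma> A g0 \<phi>}"
  proof (rule bij_betwI[where g = "\<lambda>g. g \<otimes>\<^bsub>G\<^esub> inv\<^bsub>G\<^esub> g0"])
    show "(\<lambda>h. h \<otimes>\<^bsub>G\<^esub> g0) \<in> stab \<phi> \<rightarrow> {g \<in> carrier G. col_act \<Gamma> A g \<phi> = col_act \<Gamma> A g0 \<phi>}"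
      using assms by (auto simp: stab_def col_act_comp[symmetric] mclosed)
    show "(\<lambda>g. g \<otimes>\<^bsub>G\<^esub> inv\<^bsub>G\<^esub> g0) \<in> {g \<in> carrier G. col_act \<Gamma> A g \<phi> = col_act \<Gamma> A g0 \<phi>} \<rightarrow> stab \<phi>"
    proof
      fix g assume g: "g \<in> {g \<in> carrier G. col_act \<Gamma> A g \<phi> = col_act \<Gamma> A g0 \<phi>}"
      then have g1: "g \<in> carrier G" and g2: "col_act \<Gamma> A g \<phi> = col_act \<Gamma> A g0 \<phi>" by auto
      have "col_act \<Gamma> A (g \<otimes>\<^bsub>G\<^esub> inv\<^bsub>G\<^esub> g0) \<phi> = col_act \<Gamma> A (inv\<^bsub>G\<^esub> g0) (col_act \<Gamma> A g \<phi>)"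
        using g1 assms by (simp add: col_act_comp invclosed)
      also have "\<dots> = col_act \<Gamma> A (inv\<^bsub>G\<^esub> g0) (col_act \<Gamma> A g0 \<phi>)" by (simp only: g2)
      also have "\<dots> = \<phi>" using assms by (simp add: col_act_comp col_act_one invclosed rinv)
      finally show "g \<otimes>\<^bsub>G\<^esub> inv\<^bsub>G\<^esub> g0 \<in> stab \<phi>" using g1 assms by (simp add: stab_def mclosed invclosed)
    qed
    show "h \<otimes>\<^bsub>G\<^esub> g0 \<otimes>\<^bsub>G\<^esub> inv\<^bsub>G\<^esub> g0 = h" if "h \<in> stab \<phi>" for h
      using that assms by (simp add: stab_def massoc rinv invclosed rone)
    show "g \<otimes>\<^bsub>G\<^esub> inv\<^bsub>G\<^esub> g0 \<otimes>\<^bsub>G\<^esub> g0 = g" if "g \<in> {g \<in> carrier G. col_act \<Gamma> A g \<phi> = col_act \<Gamma> A g0 \<phi>}" for g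
      using that assms by (simp add: massoc linv invclosed rone)
  qed
  then show ?thesis by (simp add: bij_betw_same_card)
qed

lemma orbit_stabilizer:
  assumes "\<phi> \<in> extensional A"
  shows "card (orb \<phi>) * card (stab \<phi>) = card (carrier G)"
proof -
  have "card (carrier G) = (\<Sum>\<psi>\<in>orb \<phi>. card {g \<in> carrier G. col_act \<Gamma> A g \<phi> = \<psi>})"
  proof -
    have "carrier G = (\<Union>\<psi>\<in>orb \<phi>. {g \<in> carrier G. col_act \<Gamma> A g \<phi> = \<psi>})"
      by (auto simp: orb_def)
    moreover have "finite (orb \<phi>)" unfolding orb_def using finG by simp
    moreover have "card (\<Union>\<psi>\<in>orb \<phi>. {g \<in> carrier G. col_act \<Gamma> A g \<phi> = \<psi>})
        = (\<Sum>\<psi>\<in>orb \<phi>. card {g \<in> carrier G. col_act \<Gamma> A g \<phi> = \<psi>})"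
      by (rule card_UN_disjoint) (use finG \<open>finite (orb \<phi>)\<close> in auto)
    ultimately show ?thesis by simp
  qed
  also have "\<dots> = (\<Sum>\<psi>\<in>orb \<phi>. card (stab \<phi>))"
    by (rule sum.cong) (auto simp: orb_def fiber_card assms)
  finally show ?thesis by simp
qed

lemma orb_eq:
  assumes "\<psi> \<in> orb \<phi>" "\<phi> \<in> extensional A"
  shows "orb \<psi> = orb \<phi>"
proof -
  obtain g0 where g0: "g0 \<in> carrier G" "\<psi> = col_act \<Gamma> A g0 \<phi>" using assms by (auto simp: orb_def)
  show ?thesis
  proof
    show "orb \<psi> \<subseteq> orb \<phi>" using g0 by (auto simp: orb_def col_act_comp) (use mclosed in blast)
    show "orb \<phi> \<subseteq> orb \<psi>"
    proof
      fix \<chi> assume "\<chi> \<in> orb \<phi>"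
      then obtain g where g: "g \<in> carrier G" "\<chi> = col_act \<Gamma> A g \<phi>" by (auto simp: orb_def)
      have "col_act \<Gamma> A (inv\<^bsub>G\<^esub> g0 \<otimes>\<^bsub>G\<^esub> g) \<psi> = \<chi>"
      proof -
        have "col_act \<Gamma> A (inv\<^bsub>G\<^esub> g0 \<otimes>\<^bsub>G\<^esub> g) \<psi> = col_act \<Gamma> A (g0 \<otimes>\<^bsub>G\<^esub> (inv\<^bsub>G\<^esub> g0 \<otimes>\<^bsub>G\<^esub> g)) \<phi>"
          using g g0 by (simp add: col_act_comp mclosed invclosed)
        also have "g0 \<otimes>\<^bsub>G\<^esub> (inv\<^bsub>G\<^esub> g0 \<otimes>\<^bsub>G\<^esub> g) = g"
          using g g0 by (simp add: massoc[symmetric] invclosed rinv lone)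
        finally show ?thesis using g by simp
      qed
      then show "\<chi> \<in> orb \<psi>" unfolding orb_def using g g0 invclosed mclosed by blast
    qed
  qed
qed

lemma orb_self: "\<phi> \<in> extensional A \<Longrightarrow> \<phi> \<in> orb \<phi>"
proof -
  assume "\<phi> \<in> extensional A"
  then have "col_act \<Gamma> A \<one>\<^bsub>G\<^esub> \<phi> = \<phi>" by (rule col_act_one)
  then show ?thesis unfolding orb_def using oneclosed by (auto intro!: exI[of _ "\<one>\<^bsub>G\<^esub>"])
qed

lemma burnside_gen:
  assumes finP: "finite P" and PE: "P \<subseteq> extensional A"
    and inv: "\<And>g \<phi>. g \<in> carrier G \<Longrightarrow> \<phi> \<in> P \<Longrightarrow> col_act \<Gamma> A g \<phi> \<in> P"
  shows "card (orb ` P) * card (carrier G) = (\<Sum>g\<in>carrier G. card {\<phi>\<in>P. col_act \<Gamma> A g \<phi> = \<phi>})"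
proof -
  have orbP: "orb \<phi> \<subseteq> P" if "\<phi> \<in> P" for \<phi> using inv that by (auto simp: orb_def)
  have "(\<Sum>g\<in>carrier G. card {\<phi>\<in>P. col_act \<Gamma> A g \<phi> = \<phi>})
      = (\<Sum>g\<in>carrier G. \<Sum>\<phi>\<in>P. (if col_act \<Gamma> A g \<phi> = \<phi> then 1 else 0))"
    using finP by (simp add: card_as_sums)
  also have "\<dots> = (\<Sum>\<phi>\<in>P. \<Sum>g\<in>carrier G. (if col_act \<Gamma> A g \<phi> = \<phi> then 1 else 0))"
    by (rule sum.swap)
  also have "\<dots> = (\<Sum>\<phi>\<in>P. card (stab \<phi>))"
    using finG by (simp add: card_as_sums stab_def)
  also have "\<dots> = (\<Sum>Q\<in>orb ` P. \<Sum>\<phi>\<in>{x \<in> P. orb x = Q}. card (stab \<phi>))"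
    by (rule sum.group[symmetric]) (use finP in auto)
  also have "\<dots> = (\<Sum>Q\<in>orb ` P. card (carrier G))"
  proof (rule sum.cong[OF refl])
    fix Q assume "Q \<in> orb ` P"
    then obtain \<phi>0 where p0: "\<phi>0 \<in> P" "Q = orb \<phi>0" by auto
    have e0: "\<phi>0 \<in> extensional A" using p0 PE by auto
    have setO: "{x \<in> P. orb x = Q} = Q"
    proof
      show "{x \<in> P. orb x = Q} \<subseteq> Q" using p0 PE orb_self by auto
      show "Q \<subseteq> {x \<in> P. orb x = Q}"
      proof
        fix x assume x: "x \<in> Q"
        then have "orb x = Q" using p0 orb_eq e0 by auto
        then show "x \<in> {x \<in> P. orb x = Q}" using x p0 orbP by auto
      qed
    qed
    have "\<phi>0 \<in> Q" using p0 orb_self e0 by simp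
    moreover have "finite Q" using orbP p0 finP finite_subset by blast
    ultimately have pos: "card Q > 0" using card_gt_0_iff by blast
    have os0: "card Q * card (stab \<phi>0) = card (carrier G)" using orbit_stabilizer[OF e0] p0 by simp
    have "(\<Sum>\<phi>\<in>Q. card (stab \<phi>)) = (\<Sum>\<phi>\<in>Q. card (stab \<phi>0))"
    proof (rule sum.cong[OF refl])
      fix \<phi> assume "\<phi> \<in> Q"
      then have oq: "orb \<phi> = Q" and ex: "\<phi> \<in> extensional A" using p0 orb_eq e0 orbP PE by blast+
      have "card (orb \<phi>) * card (stab \<phi>) = card (carrier G)" using ex by (rule orbit_stabilizer)
      then have "card Q * card (stab \<phi>) = card (carrier G)" unfolding oq .
      then have "card Q * card (stab \<phi>) = card Q * card (stab \<phi>0)" using os0 by simp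
      then show "card (stab \<phi>) = card (stab \<phi>0)" using pos by simp
    qed
    also have "\<dots> = card (carrier G)" using os0 by simp
    finally show "(\<Sum>\<phi>\<in>{x \<in> P. orb x = Q}. card (stab \<phi>)) = card (carrier G)" unfolding setO .
  qed
  also have "\<dots> = card (orb ` P) * card (carrier G)" by simp
  finally show ?thesis by (rule sym)
qed

end


locale polya = colact G "X \<union> Y" \<Gamma> for G and X Y and \<Gamma> +
  fixes \<Omega>X \<Omega>Y :: "'col set" and \<omega>X \<omega>Y :: "'col \<Rightarrow> nat"
  assumes finA: "finite (X \<union> Y)" and disj: "X \<inter> Y = {}"
    and pres: "\<forall>g \<in> carrier G. \<forall>a \<in> X \<union> Y. (\<Gamma> g a \<in> X \<longleftrightarrow> a \<in> X) \<and> (\<Gamma> g a \<in> Y \<longleftrightarrow> a \<in> Y)"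
    and disjO: "\<Omega>X \<inter> \<Omega>Y = {}"
    and finOX: "\<forall>i. finite {c \<in> \<Omega>X. \<omega>X c = i}" and finOY: "\<forall>i. finite {c \<in> \<Omega>Y. \<omega>Y c = i}"
begin

lemma funpow_in:
  assumes "g \<in> carrier G" "a \<in> X \<union> Y"
  shows "(\<Gamma> g ^^ i) a \<in> X \<union> Y"
  by (induction i) (use assms element_image in auto)

lemma funpow_X:
  assumes "g \<in> carrier G" "a \<in> X"
  shows "(\<Gamma> g ^^ i) a \<in> X"
proof (induction i)
  case 0 then show ?case using assms by simp
next
  case (Suc i)
  then show ?case using assms pres by auto
qed

lemma funpow_Y:
  assumes "g \<in> carrier G" "a \<in> Y"
  shows "(\<Gamma> g ^^ i) a \<in> Y"
proof (induction i)
  case 0 then show ?case using assms by simp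
next
  case (Suc i)
  then show ?case using assms pres by auto
qed

lemma funpow_pow:
  assumes "g \<in> carrier G" "a \<in> X \<union> Y"
  shows "(\<Gamma> g ^^ i) a = \<Gamma> (g [^]\<^bsub>G\<^esub> i) a"
proof (induction i)
  case 0 then show ?case using assms Gamma_one by simp
next
  case (Suc i)
  have "(\<Gamma> g ^^ Suc i) a = \<Gamma> g (\<Gamma> (g [^]\<^bsub>G\<^esub> i) a)" using Suc by simp
  also have "\<dots> = \<Gamma> (g \<otimes>\<^bsub>G\<^esub> (g [^]\<^bsub>G\<^esub> i)) a"
    using assms by (simp add: composition_rule monoid.nat_pow_closed[OF group.is_monoid[OF grp]])
  also have "g \<otimes>\<^bsub>G\<^esub> (g [^]\<^bsub>G\<^esub> i) = g [^]\<^bsub>G\<^esub> Suc i"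
    by (rule monoid.nat_pow_Suc2[OF group.is_monoid[OF grp] assms(1), symmetric])
  finally show ?case .
qed

lemma period:
  assumes "g \<in> carrier G" "a \<in> X \<union> Y"
  shows "(\<Gamma> g ^^ (group.ord G g * m)) a = a"
proof (induction m)
  case 0 then show ?case by simp
next
  case (Suc m)
  have "(\<Gamma> g ^^ (group.ord G g * Suc m)) a = (\<Gamma> g ^^ group.ord G g) ((\<Gamma> g ^^ (group.ord G g * m)) a)"
    by (simp add: funpow_add)
  also have "\<dots> = (\<Gamma> g ^^ group.ord G g) a" using Suc by simp
  also have "\<dots> = a" using assms funpow_pow group.pow_ord_eq_1[OF grp] Gamma_one by simp
  finally show ?case .
qed

lemma ord_pos: "g \<in> carrier G \<Longrightarrow> group.ord G g \<ge> 1"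
  using group.ord_ge_1[OF grp finG] by simp

lemma cyc_self: "a \<in> cyc s a"
  unfolding cyc_def by (auto intro!: exI[of _ 0])

lemma cyc_step: "s a \<in> cyc s a"
  unfolding cyc_def by (auto intro!: exI[of _ 1])

lemma cyc_sub:
  assumes "g \<in> carrier G" "a \<in> X \<union> Y"
  shows "cyc (\<Gamma> g) a \<subseteq> X \<union> Y"
  unfolding cyc_def using funpow_in[OF assms] by auto

lemma cyc_subX:
  assumes "g \<in> carrier G" "a \<in> X"
  shows "cyc (\<Gamma> g) a \<subseteq> X"
  unfolding cyc_def using funpow_X[OF assms] by auto

lemma cyc_subY:
  assumes "g \<in> carrier G" "a \<in> Y"
  shows "cyc (\<Gamma> g) a \<subseteq> Y"
  unfolding cyc_def using funpow_Y[OF assms] by auto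

lemma cyc_eq:
  assumes "g \<in> carrier G" "a \<in> X \<union> Y" "b \<in> cyc (\<Gamma> g) a"
  shows "cyc (\<Gamma> g) b = cyc (\<Gamma> g) a"
proof -
  let ?s = "\<Gamma> g"
  let ?p = "group.ord G g"
  obtain i where i: "b = (?s ^^ i) a" using assms(3) unfolding cyc_def by auto
  show ?thesis
  proof
    show "cyc ?s b \<subseteq> cyc ?s a"
    proof
      fix c assume "c \<in> cyc ?s b"
      then obtain j where j: "c = (?s ^^ j) b" unfolding cyc_def by auto
      have "c = (?s ^^ (j + i)) a" unfolding j i by (simp add: funpow_add)
      then show "c \<in> cyc ?s a" unfolding cyc_def by blast
    qed
    show "cyc ?s a \<subseteq> cyc ?s b"
    proof
      fix c assume "c \<in> cyc ?s a"
      then obtain j where j: "c = (?s ^^ j) a" unfolding cyc_def by auto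
      have p1: "?p \<ge> 1" using ord_pos assms by simp
      have "c = (?s ^^ j) ((?s ^^ (?p * i)) a)" using j period assms by simp
      also have "\<dots> = (?s ^^ (j + ?p * i)) a" by (simp add: funpow_add)
      also have "j + ?p * i = (j + ?p * i - i) + i"
      proof -
        have "1 * i \<le> ?p * i" using p1 by (rule mult_le_mono1)
        then show ?thesis by linarith
      qed
      also have "(?s ^^ ((j + ?p * i - i) + i)) a = (?s ^^ (j + ?p * i - i)) b"
        unfolding i by (simp add: funpow_add)
      finally show "c \<in> cyc ?s b" unfolding cyc_def by blast
    qed
  qed
qed


lemma cyc_ne_X:
  assumes "g \<in> carrier G" "a \<in> Y"
  shows "\<not> cyc (\<Gamma> g) a \<subseteq> X"
  using assms disj cyc_self[of a "\<Gamma> g"] by auto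

lemma class_eq:
  assumes "g \<in> carrier G" "c \<in> cyc (\<Gamma> g) ` (X \<union> Y)"
  shows "{x \<in> X \<union> Y. cyc (\<Gamma> g) x = c} = c"
proof -
  obtain a0 where a0: "a0 \<in> X \<union> Y" "c = cyc (\<Gamma> g) a0" using assms by auto
  show ?thesis
  proof
    show "{x \<in> X \<union> Y. cyc (\<Gamma> g) x = c} \<subseteq> c" using cyc_self by auto
    show "c \<subseteq> {x \<in> X \<union> Y. cyc (\<Gamma> g) x = c}"
      using a0 cyc_sub[OF assms(1) a0(1)] cyc_eq[OF assms(1) a0(1)] by auto
  qed
qed

lemma sum_cycles:
  assumes "g \<in> carrier G"
  shows "(\<Sum>a\<in>X \<union> Y. F (cyc (\<Gamma> g) a)) = (\<Sum>c\<in>cyc (\<Gamma> g) ` (X \<union> Y). card c * F c)"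
proof -
  let ?C = "cyc (\<Gamma> g) ` (X \<union> Y)"
  have "(\<Sum>a\<in>X \<union> Y. F (cyc (\<Gamma> g) a)) = (\<Sum>c\<in>?C. \<Sum>a\<in>{x \<in> X \<union> Y. cyc (\<Gamma> g) x = c}. F (cyc (\<Gamma> g) a))"
    by (rule sum.group[symmetric]) (use finA in auto)
  also have "\<dots> = (\<Sum>c\<in>?C. card c * F c)"
  proof (rule sum.cong[OF refl])
    fix c assume c: "c \<in> ?C"
    have "(\<Sum>a\<in>{x \<in> X \<union> Y. cyc (\<Gamma> g) x = c}. F (cyc (\<Gamma> g) a)) = (\<Sum>a\<in>{x \<in> X \<union> Y. cyc (\<Gamma> g) x = c}. F c)"
      by (rule sum.cong) auto
    also have "\<dots> = card c * F c" unfolding class_eq[OF assms c] by simp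
    finally show "(\<Sum>a\<in>{x \<in> X \<union> Y. cyc (\<Gamma> g) x = c}. F (cyc (\<Gamma> g) a)) = card c * F c" .
  qed
  finally show ?thesis .
qed

lemma weight_E:
  assumes "g \<in> carrier G"
  shows "total_weight X Y \<omega>X \<omega>Y (\<lambda>a\<in>X \<union> Y. h (cyc (\<Gamma> g) a))
       = (\<Sum>c\<in>cyc (\<Gamma> g) ` (X \<union> Y). card c * (if c \<subseteq> X then \<omega>X else \<omega>Y) (h c))"
proof -
  let ?wc = "\<lambda>c. if c \<subseteq> X then \<omega>X else \<omega>Y"
  have fX: "finite X" and fY: "finite Y" using finA by auto
  have "total_weight X Y \<omega>X \<omega>Y (\<lambda>a\<in>X \<union> Y. h (cyc (\<Gamma> g) a))
      = (\<Sum>a\<in>X. ?wc (cyc (\<Gamma> g) a) (h (cyc (\<Gamma> g) a))) + (\<Sum>a\<in>Y. ?wc (cyc (\<Gamma> g) a) (h (cyc (\<Gamma> g) a)))"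
    unfolding total_weight_def
    using cyc_subX[OF assms] cyc_ne_X[OF assms] by (intro arg_cong2[where f = "(+)"] sum.cong) auto
  also have "\<dots> = (\<Sum>a\<in>X \<union> Y. ?wc (cyc (\<Gamma> g) a) (h (cyc (\<Gamma> g) a)))"
    by (rule sum.union_disjoint[symmetric]) (use fX fY disj in auto)
  also have "\<dots> = (\<Sum>c\<in>cyc (\<Gamma> g) ` (X \<union> Y). card c * ?wc c (h c))"
    by (rule sum_cycles[OF assms])
  finally show ?thesis .
qed

lemma fixed_const:
  assumes "g \<in> carrier G" "col_act \<Gamma> (X \<union> Y) g \<phi> = \<phi>" "a \<in> X \<union> Y"
  shows "\<phi> ((\<Gamma> g ^^ i) a) = \<phi> a"
proof (induction i)
  case 0 then show ?case by simp
next
  case (Suc i)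
  have inA: "(\<Gamma> g ^^ i) a \<in> X \<union> Y" using funpow_in assms by blast
  have "\<phi> ((\<Gamma> g ^^ Suc i) a) = col_act \<Gamma> (X \<union> Y) g \<phi> ((\<Gamma> g ^^ i) a)"
    using inA unfolding col_act_def by simp
  also have "\<dots> = \<phi> ((\<Gamma> g ^^ i) a)" using assms(2) by simp
  finally show ?case using Suc by simp
qed

lemma fixed_const_cyc:
  assumes "g \<in> carrier G" "col_act \<Gamma> (X \<union> Y) g \<phi> = \<phi>" "a \<in> X \<union> Y" "b \<in> cyc (\<Gamma> g) a"
  shows "\<phi> b = \<phi> a"
  using assms fixed_const unfolding cyc_def by auto


lemma count_fixed:
  assumes g: "g \<in> carrier G"
  shows "card {\<phi> \<in> valid_colorings X Y \<Omega>X \<Omega>Y. col_act \<Gamma> (X \<union> Y) g \<phi> = \<phi> \<and> total_weight X Y \<omega>X \<omega>Y \<phi> = w}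
       = card {h \<in> PiE (cyc (\<Gamma> g) ` (X \<union> Y)) (\<lambda>c. if c \<subseteq> X then \<Omega>X else \<Omega>Y).
                 (\<Sum>c\<in>cyc (\<Gamma> g) ` (X \<union> Y). card c * (if c \<subseteq> X then \<omega>X else \<omega>Y) (h c)) = w}"
proof -
  let ?A = "X \<union> Y"
  let ?s = "\<Gamma> g"
  let ?C = "cyc ?s ` ?A"
  let ?S = "\<lambda>c. if c \<subseteq> X then \<Omega>X else \<Omega>Y"
  let ?W = "\<lambda>h. (\<Sum>c\<in>?C. card c * (if c \<subseteq> X then \<omega>X else \<omega>Y) (h c))"
  let ?E = "\<lambda>h. \<lambda>a\<in>?A. h (cyc ?s a)"
  let ?R = "\<lambda>c. SOME a. a \<in> c"
  let ?L = "{h \<in> PiE ?C ?S. ?W h = w}"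
  let ?F = "{\<phi> \<in> valid_colorings X Y \<Omega>X \<Omega>Y. col_act \<Gamma> ?A g \<phi> = \<phi> \<and> total_weight X Y \<omega>X \<omega>Y \<phi> = w}"
  have inj: "inj_on ?E (PiE ?C ?S)"
  proof (rule inj_onI)
    fix h1 h2 assume h: "h1 \<in> PiE ?C ?S" "h2 \<in> PiE ?C ?S" "?E h1 = ?E h2"
    show "h1 = h2"
    proof (rule PiE_ext[OF h(1,2)])
      fix c assume "c \<in> ?C"
      then obtain a where a: "a \<in> ?A" "c = cyc ?s a" by auto
      have "?E h1 a = ?E h2 a" using h(3) by simp
      then show "h1 c = h2 c" using a by simp
    qed
  qed
  have E_in: "?E h \<in> valid_colorings X Y \<Omega>X \<Omega>Y \<and> col_act \<Gamma> ?A g (?E h) = ?E h" if h: "h \<in> PiE ?C ?S" for h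
  proof
    have hc: "h (cyc ?s a) \<in> ?S (cyc ?s a)" if "a \<in> ?A" for a
      by (rule PiE_mem[OF h]) (use that in blast)
    show "?E h \<in> valid_colorings X Y \<Omega>X \<Omega>Y"
      unfolding valid_colorings_def
    proof (intro CollectI conjI ballI)
      have "h (cyc ?s a) \<in> \<Omega>X \<union> \<Omega>Y" if "a \<in> ?A" for a
        using hc[OF that] by (auto split: if_split_asm)
      then show "?E h \<in> ?A \<rightarrow>\<^sub>E \<Omega>X \<union> \<Omega>Y" by (simp add: PiE_iff)
    next
      fix a assume a: "a \<in> ?A"
      have Ea: "?E h a = h (cyc ?s a)" using a by simp
      have both: "(h (cyc ?s a) \<in> \<Omega>X \<longleftrightarrow> a \<in> X) \<and> (h (cyc ?s a) \<in> \<Omega>Y \<longleftrightarrow> a \<in> Y)"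
      proof (cases "a \<in> X")
        case True
        have "h (cyc ?s a) \<in> \<Omega>X" using hc[OF a] cyc_subX[OF g True] by simp
        moreover have "a \<notin> Y" using True disj by blast
        ultimately show ?thesis using True disjO by blast
      next
        case False
        then have aY: "a \<in> Y" using a by blast
        have "h (cyc ?s a) \<in> \<Omega>Y" using hc[OF a] cyc_ne_X[OF g aY] by simp
        then show ?thesis using False aY disjO by blast
      qed
      show "(?E h a \<in> \<Omega>X) = (a \<in> X)" unfolding Ea using both by blast
      show "(?E h a \<in> \<Omega>Y) = (a \<in> Y)" unfolding Ea using both by blast
    qed
    show "col_act \<Gamma> ?A g (?E h) = ?E h"
    proof (rule ext)
      fix a
      show "col_act \<Gamma> ?A g (?E h) a = ?E h a"
      proof (cases "a \<in> ?A")
        case True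
        have sa: "?s a \<in> ?A" using element_image[OF g True refl] .
        have cq: "cyc ?s (?s a) = cyc ?s a" using cyc_eq[OF g True cyc_step] .
        have "col_act \<Gamma> ?A g (?E h) a = ?E h (?s a)" unfolding col_act_def using True by (rule restrict_apply')
        also have "\<dots> = h (cyc ?s (?s a))" using sa by (rule restrict_apply')
        also have "\<dots> = h (cyc ?s a)" by (simp only: cq)
        also have "\<dots> = ?E h a" using True by (rule restrict_apply'[symmetric])
        finally show ?thesis .
      next
        case False
        then show ?thesis unfolding col_act_def by simp
      qed
    qed
  qed
  have imgEq: "?E ` ?L = ?F"
  proof
    show "?E ` ?L \<subseteq> ?F"
    proof
      fix \<phi> assume "\<phi> \<in> ?E ` ?L"
      then obtain h where h: "h \<in> PiE ?C ?S" "?W h = w" "\<phi> = ?E h" by blast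
      show "\<phi> \<in> ?F" using E_in[OF h(1)] weight_E[OF g, of h] h(2,3) by simp
    qed
    show "?F \<subseteq> ?E ` ?L"
    proof
      fix \<phi> assume "\<phi> \<in> ?F"
      then have phi: "\<phi> \<in> valid_colorings X Y \<Omega>X \<Omega>Y" "col_act \<Gamma> ?A g \<phi> = \<phi>" "total_weight X Y \<omega>X \<omega>Y \<phi> = w"
        by auto
      have ext: "\<phi> \<in> extensional ?A" using phi(1) unfolding valid_colorings_def by (auto simp: PiE_def)
      let ?h = "\<lambda>c\<in>?C. \<phi> (?R c)"
      have Rc: "?R (cyc ?s a) \<in> cyc ?s a" for a by (rule someI[of "\<lambda>x. x \<in> cyc ?s a", OF cyc_self])
      have Ea: "\<phi> (?R (cyc ?s a)) = \<phi> a" if "a \<in> ?A" for a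
        using fixed_const_cyc[OF g phi(2) that Rc] .
      have eq: "?E ?h = \<phi>"
      proof
        fix a show "?E ?h a = \<phi> a"
          using Ea ext by (cases "a \<in> ?A") (auto simp: extensional_def)
      qed
      have hin: "?h \<in> PiE ?C ?S"
      proof
        fix c assume "c \<in> ?C"
        then obtain a where a: "a \<in> ?A" "c = cyc ?s a" by auto
        have "\<phi> a \<in> ?S c"
        proof (cases "a \<in> X")
          case True
          then show ?thesis using a phi(1) cyc_subX[OF g True] unfolding valid_colorings_def by auto
        next
          case False
          then have "a \<in> Y" using a by auto
          then show ?thesis using a False phi(1) cyc_ne_X[OF g] unfolding valid_colorings_def by auto
        qed
        then show "?h c \<in> ?S c" using a Ea by simp
      qed simp
      have "?W ?h = w" using weight_E[OF g, of ?h] eq phi(3) by simp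
      then show "\<phi> \<in> ?E ` ?L" by (intro image_eqI[of _ _ ?h]) (use hin eq in auto)
    qed
  qed
  have injL: "inj_on ?E ?L" using inj by (rule inj_on_subset) auto
  have "card (?E ` ?L) = card ?L" by (rule card_image[OF injL])
  then show ?thesis unfolding imgEq .
qed


lemma cyc_card:
  assumes g: "g \<in> carrier G" and c: "c \<in> cyc (\<Gamma> g) ` (X \<union> Y)"
  shows "card c \<in> {1..card (X \<union> Y)}"
proof -
  obtain a where a: "a \<in> X \<union> Y" "c = cyc (\<Gamma> g) a" using c by auto
  have sub: "c \<subseteq> X \<union> Y" using cyc_sub[OF g a(1)] a(2) by simp
  have fin: "finite c" using finite_subset[OF sub finA] .
  have "a \<in> c" using a(2) cyc_self by simp
  then have "card c \<ge> 1" using fin by (metis One_nat_def Suc_leI card_gt_0_iff empty_iff)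
  moreover have "card c \<le> card (X \<union> Y)" using card_mono[OF finA sub] .
  ultimately show ?thesis by simp
qed

lemma prod_by_card:
  fixes f :: "nat \<Rightarrow> 'r::comm_monoid_mult"
  assumes "finite D" "\<forall>c\<in>D. card c \<in> {1..n}"
  shows "(\<Prod>c\<in>D. f (card c)) = (\<Prod>k\<in>{1..n}. f k ^ card {c \<in> D. card c = k})"
proof -
  have "(\<Prod>c\<in>D. f (card c)) = (\<Prod>k\<in>{1..n}. \<Prod>c\<in>{c \<in> D. card c = k}. f (card c))"
    by (rule prod.group[symmetric]) (use assms in auto)
  also have "\<dots> = (\<Prod>k\<in>{1..n}. f k ^ card {c \<in> D. card c = k})"
  proof (rule prod.cong[OF refl])
    fix k
    have "(\<Prod>c\<in>{c \<in> D. card c = k}. f (card c)) = (\<Prod>c\<in>{c \<in> D. card c = k}. f k)"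
      by (rule prod.cong) auto
    then show "(\<Prod>c\<in>{c \<in> D. card c = k}. f (card c)) = f k ^ card {c \<in> D. card c = k}" by simp
  qed
  finally show ?thesis .
qed

lemma cycle_count_X:
  assumes g: "g \<in> carrier G"
  shows "cycle_count X k (\<Gamma> g) = card {c \<in> cyc (\<Gamma> g) ` X. card c = k}"
proof -
  have "{cyc (\<Gamma> g) a | a. a \<in> X \<and> cyc (\<Gamma> g) a \<subseteq> X \<and> card (cyc (\<Gamma> g) a) = k} = {c \<in> cyc (\<Gamma> g) ` X. card c = k}"
    using cyc_subX[OF g] by blast
  then show ?thesis unfolding cycle_count_def by simp
qed

lemma cycle_count_Y:
  assumes g: "g \<in> carrier G"
  shows "cycle_count Y k (\<Gamma> g) = card {c \<in> cyc (\<Gamma> g) ` Y. card c = k}"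
proof -
  have "{cyc (\<Gamma> g) a | a. a \<in> Y \<and> cyc (\<Gamma> g) a \<subseteq> Y \<and> card (cyc (\<Gamma> g) a) = k} = {c \<in> cyc (\<Gamma> g) ` Y. card c = k}"
    using cyc_subY[OF g] by blast
  then show ?thesis unfolding cycle_count_def by simp
qed

lemma fix_gf:
  assumes g: "g \<in> carrier G"
  shows "Abs_fps (\<lambda>w. of_nat (card {\<phi> \<in> valid_colorings X Y \<Omega>X \<Omega>Y. col_act \<Gamma> (X \<union> Y) g \<phi> = \<phi> \<and> total_weight X Y \<omega>X \<omega>Y \<phi> = w}))
     = (\<Prod>k\<in>{1..card (X \<union> Y)}. (gen_fun \<Omega>X \<omega>X oo fps_X ^ k) ^ cycle_count X k (\<Gamma> g)
                                   * (gen_fun \<Omega>Y \<omega>Y oo fps_X ^ k) ^ cycle_count Y k (\<Gamma> g) :: rat fps)"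
proof -
  let ?A = "X \<union> Y"
  let ?s = "\<Gamma> g"
  let ?C = "cyc ?s ` ?A"
  let ?CX = "cyc ?s ` X"
  let ?CY = "cyc ?s ` Y"
  let ?S = "\<lambda>c. if c \<subseteq> X then \<Omega>X else \<Omega>Y"
  let ?wc = "\<lambda>c. if c \<subseteq> X then \<omega>X else \<omega>Y"
  let ?n = "card ?A"
  let ?T = "\<lambda>c. (gen_fun (?S c) (?wc c) oo fps_X ^ card c :: rat fps)"
  let ?xs = "\<lambda>k. gen_fun \<Omega>X \<omega>X oo fps_X ^ k :: rat fps"
  let ?ys = "\<lambda>k. gen_fun \<Omega>Y \<omega>Y oo fps_X ^ k :: rat fps"
  have finC: "finite ?C" using finA by simp
  have cpos: "card c > 0" if "c \<in> ?C" for c using cyc_card[OF g that] by simp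
  have finS: "\<forall>c\<in>?C. \<forall>n. finite {col \<in> ?S c. card c * ?wc c col = n}"
  proof (intro ballI allI)
    fix c n assume c: "c \<in> ?C"
    have "{col \<in> ?S c. card c * ?wc c col = n} \<subseteq> {col \<in> ?S c. ?wc c col = n div card c}"
      using cpos[OF c] by auto
    moreover have "finite {col \<in> ?S c. ?wc c col = n div card c}" using finOX finOY by simp
    ultimately show "finite {col \<in> ?S c. card c * ?wc c col = n}" by (rule finite_subset)
  qed
  have "Abs_fps (\<lambda>w. of_nat (card {\<phi> \<in> valid_colorings X Y \<Omega>X \<Omega>Y. col_act \<Gamma> ?A g \<phi> = \<phi> \<and> total_weight X Y \<omega>X \<omega>Y \<phi> = w}))
      = (Abs_fps (\<lambda>w. of_nat (card {h \<in> PiE ?C ?S. (\<Sum>c\<in>?C. card c * ?wc c (h c)) = w})) :: rat fps)"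
    by (simp only: count_fixed[OF g])
  also have "\<dots> = (\<Prod>c\<in>?C. (Abs_fps (\<lambda>n. of_nat (card {col \<in> ?S c. card c * ?wc c col = n})) :: rat fps))"
    by (rule gf_PiE[OF finC finS])
  also have "\<dots> = (\<Prod>c\<in>?C. ?T c)"
    by (rule prod.cong[OF refl]) (rule gen_fun_compose[OF cpos])
  also have "\<dots> = (\<Prod>c\<in>?CX. ?T c) * (\<Prod>c\<in>?CY. ?T c)"
  proof -
    have "?CX \<inter> ?CY = {}"
    proof (rule ccontr)
      assume "?CX \<inter> ?CY \<noteq> {}"
      then obtain a b where ab: "a \<in> X" "b \<in> Y" "cyc ?s a = cyc ?s b" by auto
      then show False using cyc_subX[OF g ab(1)] cyc_ne_X[OF g ab(2)] by simp
    qed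
    then show ?thesis unfolding image_Un using finA by (intro prod.union_disjoint) auto
  qed
  also have "\<dots> = (\<Prod>c\<in>?CX. ?xs (card c)) * (\<Prod>c\<in>?CY. ?ys (card c))"
  proof -
    have "(\<Prod>c\<in>?CX. ?T c) = (\<Prod>c\<in>?CX. ?xs (card c))"
      by (rule prod.cong[OF refl]) (use cyc_subX[OF g] in auto)
    moreover have "(\<Prod>c\<in>?CY. ?T c) = (\<Prod>c\<in>?CY. ?ys (card c))"
      by (rule prod.cong[OF refl]) (use cyc_ne_X[OF g] in auto)
    ultimately show ?thesis by simp
  qed
  also have "\<dots> = (\<Prod>k\<in>{1..?n}. ?xs k ^ cycle_count X k ?s) * (\<Prod>k\<in>{1..?n}. ?ys k ^ cycle_count Y k ?s)"
  proof -
    have "(\<Prod>c\<in>?CX. ?xs (card c)) = (\<Prod>k\<in>{1..?n}. ?xs k ^ card {c \<in> ?CX. card c = k})"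
      by (rule prod_by_card) (use finA cyc_card[OF g] in auto)
    moreover have "(\<Prod>c\<in>?CY. ?ys (card c)) = (\<Prod>k\<in>{1..?n}. ?ys k ^ card {c \<in> ?CY. card c = k})"
      by (rule prod_by_card) (use finA cyc_card[OF g] in auto)
    ultimately show ?thesis by (simp add: cycle_count_X[OF g] cycle_count_Y[OF g])
  qed
  also have "\<dots> = (\<Prod>k\<in>{1..?n}. ?xs k ^ cycle_count X k ?s * ?ys k ^ cycle_count Y k ?s)"
    by (rule prod.distrib[symmetric])
  finally show ?thesis .
qed


lemma bij_X:
  assumes g: "g \<in> carrier G"
  shows "bij_betw (\<Gamma> g) X X"
proof -
  have inj: "inj_on (\<Gamma> g) X" using inj_prop[OF g] by (rule inj_on_subset) auto
  have sub: "\<Gamma> g ` X \<subseteq> X" using pres g by auto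
  have "\<Gamma> g ` X = X" using endo_inj_surj[of X "\<Gamma> g"] finA inj sub by auto
  then show ?thesis using inj unfolding bij_betw_def by simp
qed

lemma bij_Y:
  assumes g: "g \<in> carrier G"
  shows "bij_betw (\<Gamma> g) Y Y"
proof -
  have inj: "inj_on (\<Gamma> g) Y" using inj_prop[OF g] by (rule inj_on_subset) auto
  have sub: "\<Gamma> g ` Y \<subseteq> Y" using pres g by auto
  have "\<Gamma> g ` Y = Y" using endo_inj_surj[of Y "\<Gamma> g"] finA inj sub by auto
  then show ?thesis using inj unfolding bij_betw_def by simp
qed

lemma wt_inv:
  assumes g: "g \<in> carrier G"
  shows "total_weight X Y \<omega>X \<omega>Y (col_act \<Gamma> (X \<union> Y) g \<phi>) = total_weight X Y \<omega>X \<omega>Y \<phi>"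
proof -
  have "(\<Sum>a\<in>X. \<omega>X (col_act \<Gamma> (X \<union> Y) g \<phi> a)) = (\<Sum>a\<in>X. \<omega>X (\<phi> (\<Gamma> g a)))"
    unfolding col_act_def by (rule sum.cong) auto
  also have "\<dots> = (\<Sum>a\<in>X. \<omega>X (\<phi> a))" by (rule sum.reindex_bij_betw[OF bij_X[OF g]])
  finally have 1: "(\<Sum>a\<in>X. \<omega>X (col_act \<Gamma> (X \<union> Y) g \<phi> a)) = (\<Sum>a\<in>X. \<omega>X (\<phi> a))" .
  have "(\<Sum>a\<in>Y. \<omega>Y (col_act \<Gamma> (X \<union> Y) g \<phi> a)) = (\<Sum>a\<in>Y. \<omega>Y (\<phi> (\<Gamma> g a)))"
    unfolding col_act_def by (rule sum.cong) auto
  also have "\<dots> = (\<Sum>a\<in>Y. \<omega>Y (\<phi> a))" by (rule sum.reindex_bij_betw[OF bij_Y[OF g]])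
  finally have 2: "(\<Sum>a\<in>Y. \<omega>Y (col_act \<Gamma> (X \<union> Y) g \<phi> a)) = (\<Sum>a\<in>Y. \<omega>Y (\<phi> a))" .
  show ?thesis unfolding total_weight_def using 1 2 by simp
qed

lemma valid_inv:
  assumes g: "g \<in> carrier G" and phi: "\<phi> \<in> valid_colorings X Y \<Omega>X \<Omega>Y"
  shows "col_act \<Gamma> (X \<union> Y) g \<phi> \<in> valid_colorings X Y \<Omega>X \<Omega>Y"
proof -
  have P: "\<phi> b \<in> \<Omega>X \<union> \<Omega>Y" "(\<phi> b \<in> \<Omega>X) = (b \<in> X)" "(\<phi> b \<in> \<Omega>Y) = (b \<in> Y)" if "b \<in> X \<union> Y" for b
    using phi that unfolding valid_colorings_def by auto
  have ga: "\<Gamma> g a \<in> X \<union> Y" if "a \<in> X \<union> Y" for a using element_image[OF g that refl] .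
  have gX: "(\<Gamma> g a \<in> X) = (a \<in> X)" "(\<Gamma> g a \<in> Y) = (a \<in> Y)" if "a \<in> X \<union> Y" for a
    using pres g that by auto
  show ?thesis unfolding valid_colorings_def
  proof (intro CollectI conjI ballI)
    show "col_act \<Gamma> (X \<union> Y) g \<phi> \<in> (X \<union> Y) \<rightarrow>\<^sub>E \<Omega>X \<union> \<Omega>Y"
      unfolding col_act_def using P(1)[OF ga] by (simp add: PiE_iff)
  next
    fix a assume a: "a \<in> X \<union> Y"
    have e: "col_act \<Gamma> (X \<union> Y) g \<phi> a = \<phi> (\<Gamma> g a)" unfolding col_act_def using a by simp
    show "(col_act \<Gamma> (X \<union> Y) g \<phi> a \<in> \<Omega>X) = (a \<in> X)" unfolding e using P(2)[OF ga[OF a]] gX(1)[OF a] by simp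
    show "(col_act \<Gamma> (X \<union> Y) g \<phi> a \<in> \<Omega>Y) = (a \<in> Y)" unfolding e using P(3)[OF ga[OF a]] gX(2)[OF a] by simp
  qed
qed

lemma finite_Phi_w:
  "finite {\<phi> \<in> valid_colorings X Y \<Omega>X \<Omega>Y. total_weight X Y \<omega>X \<omega>Y \<phi> = w}"
proof (rule finite_subset)
  let ?B = "(\<Union>k\<in>{..w}. {c \<in> \<Omega>X. \<omega>X c = k}) \<union> (\<Union>k\<in>{..w}. {c \<in> \<Omega>Y. \<omega>Y c = k})"
  show "finite (PiE (X \<union> Y) (\<lambda>_. ?B))" using finA finOX finOY by (intro finite_PiE) auto
  show "{\<phi> \<in> valid_colorings X Y \<Omega>X \<Omega>Y. total_weight X Y \<omega>X \<omega>Y \<phi> = w} \<subseteq> PiE (X \<union> Y) (\<lambda>_. ?B)"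
  proof
    fix \<phi> assume "\<phi> \<in> {\<phi> \<in> valid_colorings X Y \<Omega>X \<Omega>Y. total_weight X Y \<omega>X \<omega>Y \<phi> = w}"
    then have phi: "\<phi> \<in> valid_colorings X Y \<Omega>X \<Omega>Y" and tw: "total_weight X Y \<omega>X \<omega>Y \<phi> = w" by auto
    have fX: "finite X" and fY: "finite Y" using finA by auto
    have "\<phi> a \<in> ?B" if a: "a \<in> X \<union> Y" for a
    proof (cases "a \<in> X")
      case True
      have "\<phi> a \<in> \<Omega>X" using phi True unfolding valid_colorings_def by auto
      moreover have "\<omega>X (\<phi> a) \<le> (\<Sum>a\<in>X. \<omega>X (\<phi> a))" by (rule member_le_sum) (use True fX in auto)
      then have "\<omega>X (\<phi> a) \<le> w" using tw unfolding total_weight_def by simp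
      ultimately show ?thesis by auto
    next
      case False
      then have aY: "a \<in> Y" using a by auto
      have "\<phi> a \<in> \<Omega>Y" using phi aY unfolding valid_colorings_def by auto
      moreover have "\<omega>Y (\<phi> a) \<le> (\<Sum>a\<in>Y. \<omega>Y (\<phi> a))" by (rule member_le_sum) (use aY fY in auto)
      then have "\<omega>Y (\<phi> a) \<le> w" using tw unfolding total_weight_def by simp
      ultimately show ?thesis by auto
    qed
    moreover have "\<phi> \<in> extensional (X \<union> Y)" using phi unfolding valid_colorings_def by (auto simp: PiE_def)
    ultimately show "\<phi> \<in> PiE (X \<union> Y) (\<lambda>_. ?B)" by (simp add: PiE_iff)
  qed
qed

lemma orbits_w:
  "{Q \<in> col_orbits G \<Gamma> (X \<union> Y) (valid_colorings X Y \<Omega>X \<Omega>Y). \<forall>\<phi> \<in> Q. total_weight X Y \<omega>X \<omega>Y \<phi> = w}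
   = orb ` {\<phi> \<in> valid_colorings X Y \<Omega>X \<Omega>Y. total_weight X Y \<omega>X \<omega>Y \<phi> = w}"
proof -
  have co: "col_orbits G \<Gamma> (X \<union> Y) (valid_colorings X Y \<Omega>X \<Omega>Y) = orb ` valid_colorings X Y \<Omega>X \<Omega>Y"
    unfolding col_orbits_def orb_def by auto
  have ext: "\<phi> \<in> extensional (X \<union> Y)" if "\<phi> \<in> valid_colorings X Y \<Omega>X \<Omega>Y" for \<phi>
    using that unfolding valid_colorings_def by (auto simp: PiE_def)
  show ?thesis unfolding co
  proof
    show "{Q \<in> orb ` valid_colorings X Y \<Omega>X \<Omega>Y. \<forall>\<phi>\<in>Q. total_weight X Y \<omega>X \<omega>Y \<phi> = w}
        \<subseteq> orb ` {\<phi> \<in> valid_colorings X Y \<Omega>X \<Omega>Y. total_weight X Y \<omega>X \<omega>Y \<phi> = w}"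
    proof
      fix Q assume "Q \<in> {Q \<in> orb ` valid_colorings X Y \<Omega>X \<Omega>Y. \<forall>\<phi>\<in>Q. total_weight X Y \<omega>X \<omega>Y \<phi> = w}"
      then obtain \<phi> where phi: "\<phi> \<in> valid_colorings X Y \<Omega>X \<Omega>Y" "Q = orb \<phi>" "\<forall>\<psi>\<in>Q. total_weight X Y \<omega>X \<omega>Y \<psi> = w"
        by auto
      have "\<phi> \<in> Q" using orb_self[OF ext[OF phi(1)]] phi(2) by simp
      then have "total_weight X Y \<omega>X \<omega>Y \<phi> = w" using phi(3) by blast
      then show "Q \<in> orb ` {\<phi> \<in> valid_colorings X Y \<Omega>X \<Omega>Y. total_weight X Y \<omega>X \<omega>Y \<phi> = w}"
        using phi(1,2) by blast
    qed
    show "orb ` {\<phi> \<in> valid_colorings X Y \<Omega>X \<Omega>Y. total_weight X Y \<omega>X \<omega>Y \<phi> = w}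
        \<subseteq> {Q \<in> orb ` valid_colorings X Y \<Omega>X \<Omega>Y. \<forall>\<phi>\<in>Q. total_weight X Y \<omega>X \<omega>Y \<phi> = w}"
    proof
      fix Q assume "Q \<in> orb ` {\<phi> \<in> valid_colorings X Y \<Omega>X \<Omega>Y. total_weight X Y \<omega>X \<omega>Y \<phi> = w}"
      then obtain \<phi> where phi: "\<phi> \<in> valid_colorings X Y \<Omega>X \<Omega>Y" "total_weight X Y \<omega>X \<omega>Y \<phi> = w" "Q = orb \<phi>"
        by auto
      have "\<forall>\<psi>\<in>Q. total_weight X Y \<omega>X \<omega>Y \<psi> = w"
      proof
        fix \<psi> assume "\<psi> \<in> Q"
        then obtain g where "g \<in> carrier G" "\<psi> = col_act \<Gamma> (X \<union> Y) g \<phi>" using phi(3) unfolding orb_def by auto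
        then show "total_weight X Y \<omega>X \<omega>Y \<psi> = w" using wt_inv phi(2) by simp
      qed
      then show "Q \<in> {Q \<in> orb ` valid_colorings X Y \<Omega>X \<Omega>Y. \<forall>\<phi>\<in>Q. total_weight X Y \<omega>X \<omega>Y \<phi> = w}"
        using phi(1,3) by blast
    qed
  qed
qed

lemma burnside_w:
  "card {Q \<in> col_orbits G \<Gamma> (X \<union> Y) (valid_colorings X Y \<Omega>X \<Omega>Y). \<forall>\<phi> \<in> Q. total_weight X Y \<omega>X \<omega>Y \<phi> = w}
     * card (carrier G)
   = (\<Sum>g\<in>carrier G. card {\<phi> \<in> valid_colorings X Y \<Omega>X \<Omega>Y. col_act \<Gamma> (X \<union> Y) g \<phi> = \<phi> \<and> total_weight X Y \<omega>X \<omega>Y \<phi> = w})"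
proof -
  let ?P = "{\<phi> \<in> valid_colorings X Y \<Omega>X \<Omega>Y. total_weight X Y \<omega>X \<omega>Y \<phi> = w}"
  have "card (orb ` ?P) * card (carrier G) = (\<Sum>g\<in>carrier G. card {\<phi> \<in> ?P. col_act \<Gamma> (X \<union> Y) g \<phi> = \<phi>})"
  proof (rule burnside_gen)
    show "finite ?P" by (rule finite_Phi_w)
    show "?P \<subseteq> extensional (X \<union> Y)" unfolding valid_colorings_def by (auto simp: PiE_def)
    show "col_act \<Gamma> (X \<union> Y) g \<phi> \<in> ?P" if "g \<in> carrier G" "\<phi> \<in> ?P" for g \<phi>
      using that valid_inv wt_inv by auto
  qed
  moreover have "{\<phi> \<in> ?P. col_act \<Gamma> (X \<union> Y) g \<phi> = \<phi>} = {\<phi> \<in> valid_colorings X Y \<Omega>X \<Omega>Y. col_act \<Gamma> (X \<union> Y) g \<phi> = \<phi> \<and> total_weight X Y \<omega>X \<omega>Y \<phi> = w}" for g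
    by auto
  ultimately show ?thesis unfolding orbits_w by simp
qed

end

theorem theorem1:
  fixes G :: "('g, 'm) monoid_scheme"
    and \<Gamma> :: "'g \<Rightarrow> 'a \<Rightarrow> 'a"
    and X Y :: "'a set"
    and \<Omega>X \<Omega>Y :: "'c set"
    and \<omega>X \<omega>Y :: "'c \<Rightarrow> nat"
  assumes "group G" and "finite (carrier G)"
    and "finite (X \<union> Y)" and "X \<inter> Y = {}"
    and "group_action G (X \<union> Y) \<Gamma>"
    and "\<forall>g \<in> carrier G. \<forall>a \<in> X \<union> Y. (\<Gamma> g a \<in> X \<longleftrightarrow> a \<in> X) \<and> (\<Gamma> g a \<in> Y \<longleftrightarrow> a \<in> Y)"
    and "\<Omega>X \<inter> \<Omega>Y = {}"
    and "\<forall>c \<in> \<Omega>X. \<omega>X c > 0" and "\<forall>c \<in> \<Omega>Y. \<omega>Y c > 0"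
    and "\<forall>i. finite {c \<in> \<Omega>X. \<omega>X c = i}" and "\<forall>i. finite {c \<in> \<Omega>Y. \<omega>Y c = i}"
  shows "Abs_fps (\<lambda>w. of_nat (card {Orb \<in> col_orbits G \<Gamma> (X \<union> Y) (valid_colorings X Y \<Omega>X \<Omega>Y).
              \<forall>\<phi> \<in> Orb. total_weight X Y \<omega>X \<omega>Y \<phi> = w}))
         = (bip_cycle_index G \<Gamma> X Y
              (\<lambda>k. gen_fun \<Omega>X \<omega>X oo fps_X ^ k)
              (\<lambda>k. gen_fun \<Omega>Y \<omega>Y oo fps_X ^ k) :: rat fps)"
proof -
  interpret polya where G = G and X = X and Y = Y and \<Gamma> = \<Gamma> and \<Omega>X = \<Omega>X and \<Omega>Y = \<Omega>Y
      and \<omega>X = \<omega>X and \<omega>Y = \<omega>Y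
  proof -
    interpret group_action G "X \<union> Y" \<Gamma> by (rule assms(5))
    show "polya G X Y \<Gamma> \<Omega>X \<Omega>Y \<omega>X \<omega>Y"
      unfolding polya_def polya_axioms_def colact_def colact_axioms_def using assms by auto
  qed
  let ?F = "\<lambda>g w. card {\<phi> \<in> valid_colorings X Y \<Omega>X \<Omega>Y. col_act \<Gamma> (X \<union> Y) g \<phi> = \<phi> \<and> total_weight X Y \<omega>X \<omega>Y \<phi> = w}"
  let ?O = "\<lambda>w. card {Orb \<in> col_orbits G \<Gamma> (X \<union> Y) (valid_colorings X Y \<Omega>X \<Omega>Y).
              \<forall>\<phi> \<in> Orb. total_weight X Y \<omega>X \<omega>Y \<phi> = w}"
  have Gpos: "card (carrier G) > 0" using assms(2) oneclosed card_gt_0_iff by blast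
  have sumeq: "(\<Sum>g\<in>carrier G. \<Prod>k\<in>{1..card (X \<union> Y)}.
        (gen_fun \<Omega>X \<omega>X oo fps_X ^ k) ^ cycle_count X k (\<Gamma> g) * (gen_fun \<Omega>Y \<omega>Y oo fps_X ^ k) ^ cycle_count Y k (\<Gamma> g))
      = (\<Sum>g\<in>carrier G. (Abs_fps (\<lambda>w. of_nat (?F g w)) :: rat fps))"
    by (rule sum.cong[OF refl]) (rule fix_gf[symmetric])
  have "bip_cycle_index G \<Gamma> X Y (\<lambda>k. gen_fun \<Omega>X \<omega>X oo fps_X ^ k) (\<lambda>k. gen_fun \<Omega>Y \<omega>Y oo fps_X ^ k)
      = fps_const (1 / of_nat (card (carrier G))) * (\<Sum>g\<in>carrier G. (Abs_fps (\<lambda>w. of_nat (?F g w)) :: rat fps))"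
    unfolding bip_cycle_index_def sumeq ..
  also have "\<dots> = Abs_fps (\<lambda>w. of_nat (?O w))"
  proof (rule fps_ext)
    fix w
    have "?O w * card (carrier G) = (\<Sum>g\<in>carrier G. ?F g w)" by (rule burnside_w)
    then have "(of_nat (?O w * card (carrier G)) :: rat) = of_nat (\<Sum>g\<in>carrier G. ?F g w)" by (rule arg_cong)
    then have e1: "(of_nat (?O w) :: rat) * of_nat (card (carrier G)) = (\<Sum>g\<in>carrier G. of_nat (?F g w))"
      by (simp only: of_nat_mult of_nat_sum)
    have nz: "(of_nat (card (carrier G)) :: rat) \<noteq> 0" using Gpos by simp
    have e2: "(of_nat (?O w) :: rat) = 1 / of_nat (card (carrier G)) * (\<Sum>g\<in>carrier G. of_nat (?F g w))"
      using e1 nz by (simp add: eq_divide_eq)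
    have "(fps_const (1 / of_nat (card (carrier G))) * (\<Sum>g\<in>carrier G. (Abs_fps (\<lambda>w. of_nat (?F g w)) :: rat fps))) $ w
        = 1 / of_nat (card (carrier G)) * (\<Sum>g\<in>carrier G. of_nat (?F g w))"
      by (simp only: fps_mult_left_const_nth fps_sum_nth fps_nth_Abs_fps)
    also have "\<dots> = Abs_fps (\<lambda>w. (of_nat (?O w) :: rat)) $ w" using e2 by simp
    finally show "(fps_const (1 / of_nat (card (carrier G))) * (\<Sum>g\<in>carrier G. (Abs_fps (\<lambda>w. of_nat (?F g w)) :: rat fps))) $ w
        = Abs_fps (\<lambda>w. of_nat (?O w)) $ w" .
  qed
  finally show ?thesis by (rule sym)
qed

end
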